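(* For weights $\boldsymbol\sigma,\boldsymbol\sigma'$ and $a\in\mathbb C$ (generic, so that the entries below are defined), define the $N\times N$ matrix $$F_{lj}(\boldsymbol\sigma',a,\boldsymbol\sigma)=\prod_{k\ne l}\frac{\sin\pi\left((a+1)/N+\sigma'^{(j)}-\sigma^{(k)}\right)}{\sin\pi\left(\sigma^{(k)}-\sigma^{(l)}\right)}.$$ Then for $m=1,\dots,N$, $$F(\boldsymbol\sigma',a,\boldsymbol\sigma\pm\boldsymbol h_m)=D_m^{N-1}F(\boldsymbol\sigma',a\pm1,\boldsymbol\sigma),\qquad F(\boldsymbol\sigma'\pm\boldsymbol h_m,a,\boldsymbol\sigma)=F(\boldsymbol\sigma',a\mp1,\boldsymbol\sigma)D_m^{N-1},$$ and consequently, for $m,s=1,\dots,N$, $$F(\boldsymbol\sigma',a,\boldsymbol\sigma+\boldsymbol h_m-\boldsymbol h_s)=D_m^{N-1}D_s^{N-1}F(\boldsymbol\sigma',a,\boldsymbol\sigma),\qquad F(\boldsymbol\sigma'+\boldsymbol h_m-\boldsymbol h_s,a,\boldsymbol\sigma)=F(\boldsymbol\sigma',a,\boldsymbol\sigma)D_m^{N-1}D_s^{N-1}.$$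
   Context: Weights are vectors $\boldsymbol\sigma=(\sigma^{(1)},\dots,\sigma^{(N)})\in\mathbb C^N$ with zero component sum. $\boldsymbol h_m\in\mathbb C^N$ has components $h_m^{(k)}=\delta_{mk}-1/N$. $D_m$ is the diagonal matrix with $(D_m)_{kj}=(-1)^{\delta_{km}}\delta_{kj}$. *)

theory Defs
  imports "HOL-Analysis.Analysis"
begin

definition weight :: "complex ^ 'n::finite \<Rightarrow> bool" where
  "weight \<sigma> \<longleftrightarrow> (\<Sum>k\<in>UNIV. \<sigma> $ k) = 0"

definition hvec :: "'n::finite \<Rightarrow> complex ^ 'n" where
  "hvec m = (\<chi> k. (if k = m then 1 else 0) - 1 / of_nat CARD('n))"

definition Dmat :: "'n::finite \<Rightarrow> complex ^ 'n ^ 'n" where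
  "Dmat m = (\<chi> k j. if k = j then (if k = m then -1 else 1) else 0)"

primrec matpow :: "complex ^ 'n::finite ^ 'n \<Rightarrow> nat \<Rightarrow> complex ^ 'n ^ 'n" where
  "matpow A 0 = mat 1"
| "matpow A (Suc n) = A ** matpow A n"

definition Fmat :: "complex ^ 'n::finite \<Rightarrow> complex \<Rightarrow> complex ^ 'n \<Rightarrow> complex ^ 'n ^ 'n" where
  "Fmat \<sigma>' a \<sigma> = (\<chi> l j. \<Prod>k\<in>UNIV - {l}.
      sin (of_real pi * ((a + 1) / of_nat CARD('n) + \<sigma>' $ j - \<sigma> $ k))
      / sin (of_real pi * (\<sigma> $ k - \<sigma> $ l)))"

definition generic :: "complex ^ 'n::finite \<Rightarrow> bool" where
  "generic \<sigma> \<longleftrightarrow> (\<forall>k l. k \<noteq> l \<longrightarrow> sin (of_real pi * (\<sigma> $ k - \<sigma> $ l)) \<noteq> 0)"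

end

theory Submission
  imports Defs
begin

lemma sinp: "sin (x + of_real pi) = - sin (x::complex)" "sin (x - of_real pi) = - sin (x::complex)"
  by (simp_all add: sin_add sin_diff flip: sin_of_real cos_of_real)

definition sg :: "'n \<Rightarrow> 'n \<Rightarrow> complex" where "sg m k = (if k = m then -1 else 1)"

lemma diagL: "(\<chi> k j. if k = j then d k else (0::complex)) ** A = (\<chi> l j. d l * A$l$j)"
proof -
  have "\<And>i ia. (\<Sum>k\<in>UNIV. (if i = k then d i else 0) * A $ k $ ia) = d i * A $ i $ ia"
  proof -
    fix i ia
    have "(\<Sum>k\<in>UNIV. (if i = k then d i else 0) * A $ k $ ia) = (\<Sum>k\<in>UNIV. if i = k then d i * A $ k $ ia else 0)"
      by (intro sum.cong) auto
    then show "(\<Sum>k\<in>UNIV. (if i = k then d i else 0) * A $ k $ ia) = d i * A $ i $ ia" by simp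
  qed
  then show ?thesis by (simp add: matrix_matrix_mult_def vec_eq_iff)
qed

lemma diagR: "A ** (\<chi> k j. if k = j then d k else (0::complex)) = (\<chi> l j. A$l$j * d j)"
proof -
  have "\<And>i ia. (\<Sum>k\<in>UNIV. A $ i $ k * (if k = ia then d k else 0)) = A $ i $ ia * d ia"
  proof -
    fix i ia
    have "(\<Sum>k\<in>UNIV. A $ i $ k * (if k = ia then d k else 0)) = (\<Sum>k\<in>UNIV. if k = ia then A $ i $ k * d k else 0)"
      by (intro sum.cong) auto
    then show "(\<Sum>k\<in>UNIV. A $ i $ k * (if k = ia then d k else 0)) = A $ i $ ia * d ia" by simp
  qed
  then show ?thesis by (simp add: matrix_matrix_mult_def vec_eq_iff)
qed

lemma Dmat_diag: "Dmat m = (\<chi> k j. if k = j then sg m k else 0)"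
  by (simp add: Dmat_def sg_def vec_eq_iff)

lemma matpow_D: "matpow (Dmat m) n = (\<chi> k j. if k = j then sg m k ^ n else 0)"
proof (induction n)
  case 0 then show ?case by (simp add: mat_def vec_eq_iff)
next
  case (Suc n) then show ?case
    by (simp add: Dmat_diag diagL vec_eq_iff)
qed

lemma Dleft: "matpow (Dmat m) n ** A = (\<chi> l j. sg m l ^ n * A$l$j)"
  by (simp add: matpow_D diagL)

lemma Dright: "A ** matpow (Dmat m) n = (\<chi> l j. A$l$j * sg m j ^ n)"
  by (simp add: matpow_D diagR)

lemma card_rm: "card (UNIV - {l::'n::finite}) = CARD('n) - 1"
  by (simp add: card_Diff_singleton)

lemma prod_row:
  fixes f g h w :: "'n::finite \<Rightarrow> complex"
  assumes "\<And>k. k \<noteq> l \<Longrightarrow> f k = sg m k * g k"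
    and "\<And>k. k \<noteq> l \<Longrightarrow> h k = sg m k * sg m l * w k"
  shows "(\<Prod>k\<in>UNIV - {l}. f k / h k) = sg m l ^ (CARD('n) - 1) * (\<Prod>k\<in>UNIV - {l}. g k / w k)"
proof -
  have "(\<Prod>k\<in>UNIV - {l}. f k / h k) = (\<Prod>k\<in>UNIV - {l}. sg m l * (g k / w k))"
    using assms by (intro prod.cong) (auto simp: sg_def)
  also have "\<dots> = sg m l ^ (CARD('n) - 1) * (\<Prod>k\<in>UNIV - {l}. g k / w k)"
    by (simp only: prod.distrib prod_constant card_rm)
  finally show ?thesis .
qed

lemma prod_col:
  fixes f g w :: "'n::finite \<Rightarrow> complex"
  assumes "\<And>k. k \<noteq> l \<Longrightarrow> f k = c * g k"
  shows "(\<Prod>k\<in>UNIV - {l}. f k / w k) = c ^ (CARD('n) - 1) * (\<Prod>k\<in>UNIV - {l}. g k / w k)"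
proof -
  have "(\<Prod>k\<in>UNIV - {l}. f k / w k) = (\<Prod>k\<in>UNIV - {l}. c * (g k / w k))"
    using assms by (intro prod.cong) auto
  also have "\<dots> = c ^ (CARD('n) - 1) * (\<Prod>k\<in>UNIV - {l}. g k / w k)"
    by (simp only: prod.distrib prod_constant card_rm)
  finally show ?thesis .
qed

lemma L1: fixes \<sigma> \<sigma>' :: "complex ^ 'n::finite" shows "Fmat \<sigma>' a (\<sigma> + hvec m) = matpow (Dmat m) (CARD('n) - 1) ** Fmat \<sigma>' (a + 1) \<sigma>"
  unfolding Dleft
proof (subst vec_eq_iff, intro allI, subst vec_eq_iff, intro allI)
  fix l j :: 'n
  let ?N = "of_nat CARD('n) :: complex"
  show "Fmat \<sigma>' a (\<sigma> + hvec m) $ l $ j = (\<chi> l j. sg m l ^ (CARD('n) - 1) * Fmat \<sigma>' (a + 1) \<sigma> $ l $ j) $ l $ j"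
    unfolding Fmat_def vec_lambda_beta
  proof (rule prod_row)
    fix k assume "k \<noteq> l"
    have "of_real pi * ((a + 1) / ?N + \<sigma>' $ j - (\<sigma> + hvec m) $ k) =
      of_real pi * ((a + 1 + 1) / ?N + \<sigma>' $ j - \<sigma> $ k) - (if k = m then of_real pi else 0)"
      by (simp add: hvec_def add_divide_distrib algebra_simps)
    then show "sin (of_real pi * ((a + 1) / ?N + \<sigma>' $ j - (\<sigma> + hvec m) $ k)) =
      sg m k * sin (of_real pi * ((a + 1 + 1) / ?N + \<sigma>' $ j - \<sigma> $ k))"
      by (simp add: sg_def sinp)
    have "of_real pi * ((\<sigma> + hvec m) $ k - (\<sigma> + hvec m) $ l) =
      of_real pi * (\<sigma> $ k - \<sigma> $ l) + (if k = m then of_real pi else 0) - (if l = m then of_real pi else 0)"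
      by (simp add: hvec_def algebra_simps)
    then show "sin (of_real pi * ((\<sigma> + hvec m) $ k - (\<sigma> + hvec m) $ l)) =
      sg m k * sg m l * sin (of_real pi * (\<sigma> $ k - \<sigma> $ l))"
      using \<open>k \<noteq> l\<close> by (simp add: sg_def sinp)
  qed
qed

lemma L2: fixes \<sigma> \<sigma>' :: "complex ^ 'n::finite" shows "Fmat \<sigma>' a (\<sigma> - hvec m) = matpow (Dmat m) (CARD('n) - 1) ** Fmat \<sigma>' (a - 1) \<sigma>"
  unfolding Dleft
proof (subst vec_eq_iff, intro allI, subst vec_eq_iff, intro allI)
  fix l j :: 'n
  let ?N = "of_nat CARD('n) :: complex"
  show "Fmat \<sigma>' a (\<sigma> - hvec m) $ l $ j = (\<chi> l j. sg m l ^ (CARD('n) - 1) * Fmat \<sigma>' (a - 1) \<sigma> $ l $ j) $ l $ j"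
    unfolding Fmat_def vec_lambda_beta
  proof (rule prod_row)
    fix k assume "k \<noteq> l"
    have "of_real pi * ((a + 1) / ?N + \<sigma>' $ j - (\<sigma> - hvec m) $ k) =
      of_real pi * ((a - 1 + 1) / ?N + \<sigma>' $ j - \<sigma> $ k) + (if k = m then of_real pi else 0)"
      by (simp add: hvec_def add_divide_distrib diff_divide_distrib algebra_simps)
    then show "sin (of_real pi * ((a + 1) / ?N + \<sigma>' $ j - (\<sigma> - hvec m) $ k)) =
      sg m k * sin (of_real pi * ((a - 1 + 1) / ?N + \<sigma>' $ j - \<sigma> $ k))"
      by (simp add: sg_def sinp)
    have "of_real pi * ((\<sigma> - hvec m) $ k - (\<sigma> - hvec m) $ l) =
      of_real pi * (\<sigma> $ k - \<sigma> $ l) - (if k = m then of_real pi else 0) + (if l = m then of_real pi else 0)"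
      by (simp add: hvec_def algebra_simps)
    then show "sin (of_real pi * ((\<sigma> - hvec m) $ k - (\<sigma> - hvec m) $ l)) =
      sg m k * sg m l * sin (of_real pi * (\<sigma> $ k - \<sigma> $ l))"
      using \<open>k \<noteq> l\<close> by (simp add: sg_def sinp)
  qed
qed

lemma L3: fixes \<sigma> \<sigma>' :: "complex ^ 'n::finite" shows "Fmat (\<sigma>' + hvec m) a \<sigma> = Fmat \<sigma>' (a - 1) \<sigma> ** matpow (Dmat m) (CARD('n) - 1)"
  unfolding Dright
proof (subst vec_eq_iff, intro allI, subst vec_eq_iff, intro allI)
  fix l j :: 'n
  let ?N = "of_nat CARD('n) :: complex"
  have "Fmat (\<sigma>' + hvec m) a \<sigma> $ l $ j = sg m j ^ (CARD('n) - 1) * Fmat \<sigma>' (a - 1) \<sigma> $ l $ j"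
    unfolding Fmat_def vec_lambda_beta
  proof (rule prod_col)
    fix k assume "k \<noteq> l"
    have "of_real pi * ((a + 1) / ?N + (\<sigma>' + hvec m) $ j - \<sigma> $ k) =
      of_real pi * ((a - 1 + 1) / ?N + \<sigma>' $ j - \<sigma> $ k) + (if j = m then of_real pi else 0)"
      by (simp add: hvec_def add_divide_distrib diff_divide_distrib algebra_simps)
    then show "sin (of_real pi * ((a + 1) / ?N + (\<sigma>' + hvec m) $ j - \<sigma> $ k)) =
      sg m j * sin (of_real pi * ((a - 1 + 1) / ?N + \<sigma>' $ j - \<sigma> $ k))"
      by (simp add: sg_def sinp)
  qed
  then show "Fmat (\<sigma>' + hvec m) a \<sigma> $ l $ j = (\<chi> l j. Fmat \<sigma>' (a - 1) \<sigma> $ l $ j * sg m j ^ (CARD('n) - 1)) $ l $ j"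
    by (simp add: mult.commute)
qed

lemma L4: fixes \<sigma> \<sigma>' :: "complex ^ 'n::finite" shows "Fmat (\<sigma>' - hvec m) a \<sigma> = Fmat \<sigma>' (a + 1) \<sigma> ** matpow (Dmat m) (CARD('n) - 1)"
  unfolding Dright
proof (subst vec_eq_iff, intro allI, subst vec_eq_iff, intro allI)
  fix l j :: 'n
  let ?N = "of_nat CARD('n) :: complex"
  have "Fmat (\<sigma>' - hvec m) a \<sigma> $ l $ j = sg m j ^ (CARD('n) - 1) * Fmat \<sigma>' (a + 1) \<sigma> $ l $ j"
    unfolding Fmat_def vec_lambda_beta
  proof (rule prod_col)
    fix k assume "k \<noteq> l"
    have "of_real pi * ((a + 1) / ?N + (\<sigma>' - hvec m) $ j - \<sigma> $ k) =
      of_real pi * ((a + 1 + 1) / ?N + \<sigma>' $ j - \<sigma> $ k) - (if j = m then of_real pi else 0)"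
      by (simp add: hvec_def add_divide_distrib diff_divide_distrib algebra_simps)
    then show "sin (of_real pi * ((a + 1) / ?N + (\<sigma>' - hvec m) $ j - \<sigma> $ k)) =
      sg m j * sin (of_real pi * ((a + 1 + 1) / ?N + \<sigma>' $ j - \<sigma> $ k))"
      by (simp add: sg_def sinp)
  qed
  then show "Fmat (\<sigma>' - hvec m) a \<sigma> $ l $ j = (\<chi> l j. Fmat \<sigma>' (a + 1) \<sigma> $ l $ j * sg m j ^ (CARD('n) - 1)) $ l $ j"
    by (simp add: mult.commute)
qed

theorem proposition4p2:
  fixes \<sigma> \<sigma>' :: "complex ^ 'n::finite" and a :: complex and m s :: 'n
  assumes "weight \<sigma>" and "weight \<sigma>'" and "generic \<sigma>"
  shows "Fmat \<sigma>' a (\<sigma> + hvec m) = matpow (Dmat m) (CARD('n) - 1) ** Fmat \<sigma>' (a + 1) \<sigma>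
    \<and> Fmat \<sigma>' a (\<sigma> - hvec m) = matpow (Dmat m) (CARD('n) - 1) ** Fmat \<sigma>' (a - 1) \<sigma>
    \<and> Fmat (\<sigma>' + hvec m) a \<sigma> = Fmat \<sigma>' (a - 1) \<sigma> ** matpow (Dmat m) (CARD('n) - 1)
    \<and> Fmat (\<sigma>' - hvec m) a \<sigma> = Fmat \<sigma>' (a + 1) \<sigma> ** matpow (Dmat m) (CARD('n) - 1)
    \<and> Fmat \<sigma>' a (\<sigma> + hvec m - hvec s) =
        matpow (Dmat m) (CARD('n) - 1) ** matpow (Dmat s) (CARD('n) - 1) ** Fmat \<sigma>' a \<sigma>
    \<and> Fmat (\<sigma>' + hvec m - hvec s) a \<sigma> =
        Fmat \<sigma>' a \<sigma> ** matpow (Dmat m) (CARD('n) - 1) ** matpow (Dmat s) (CARD('n) - 1)"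
proof (intro conjI)
  show "Fmat \<sigma>' a (\<sigma> + hvec m - hvec s) =
        matpow (Dmat m) (CARD('n) - 1) ** matpow (Dmat s) (CARD('n) - 1) ** Fmat \<sigma>' a \<sigma>"
    unfolding L2 L1 matrix_mul_assoc[symmetric] by (simp add: Dleft vec_eq_iff mult.assoc mult.left_commute)
  show "Fmat (\<sigma>' + hvec m - hvec s) a \<sigma> =
        Fmat \<sigma>' a \<sigma> ** matpow (Dmat m) (CARD('n) - 1) ** matpow (Dmat s) (CARD('n) - 1)"
    unfolding L4 L3 by simp
qed (rule L1 L2 L3 L4)+

end
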